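(* Assume the setting of the context, Assumptions (A1)–(A3), and that $\mathcal{F}_n$ is well-calibrated. Let \[ \lambda_{\text{pessimism}}=\bar C\,\frac{\gamma}{1-\gamma}\,\frac{(1+\sqrt{d_{\mathcal{S}}})\beta_N(\delta)}{\sigma},\qquad\bar C=\max\{C_{\max},k_{\max}\}. \] Then with probability at least $1-\delta$, for all episodes $n=1,\dots,N$, all times $t$ and all $(s_t,a_t)\in\mathcal{S}\times\mathcal{A}$, \[ \gamma^{t+1}\max_{\tilde f\in\mathcal{F}_n}\mathbb{E}_\omega\big[\bar V_c^{\hat\pi}(\tilde f(s_t,a_t)+\omega_t)\big]\le\gamma^t\lambda_{\text{pessimism}}\|\sigma_n(s_t,a_t)\|+\mathbb{E}_{\hat\pi}\Big[\sum_{\tau=t+1}^\infty\gamma^\tau\big(c(s_\tau,a_\tau)+\lambda_{\text{pessimism}}\|\sigma_n(s_\tau,a_\tau)\|\big)\Big], \] where on the right $s_{t+1}=\mu_n(s_t,a_t)+\omega_t$, $s_{\tau+1}=\mu_n(s_\tau,a_\tau)+\omega_\tau$ and $a_\tau=\hat\pi(s_\tau)$ for $\tau\ge t+1$.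
   Context: Setting: discounted CMDP with state space $\mathcal{S}\subseteq\mathbb{R}^{d_{\mathcal{S}}}$, compact action space $\mathcal{A}$, unknown dynamics $s_{t+1}=f(s_t,a_t)+\omega_t$, cost $c:\mathcal{S}\times\mathcal{A}\to[0,C_{\max}]$, discount $\gamma\in(0,1)$. (A1) $\omega_t$ i.i.d. zero-mean Gaussian with variance $\sigma^2$. (A2) $f$, reward, $c$ and all $\sigma_n$ Lipschitz with known constants. (A3) each component $f_i$ lies in the RKHS of a kernel $k$ with $\|f_i\|_k\le B$ and $k((s,a),(s,a))\le k_{\max}$. Model: nominal $\mu_n:\mathcal{S}\times\mathcal{A}\to\mathbb{R}^{d_{\mathcal{S}}}$ and uncertainty $\sigma_n$; $\mathcal{F}_{n'}=\{\tilde f:|\tilde f-\mu_{n'}|\le\beta_{n'}\sigma_{n'}\}$; well-calibrated means that with probability $\ge1-\delta$, $f(s,a)\in\mathcal{F}_n=\bigcap_{n'\le n}\mathcal{F}_{n'}$ for all $(s,a)$; $\beta_N(\delta)$ is the calibration constant at episode $N$. $\hat\pi:\mathcal{S}\to\mathcal{A}$ is a deterministic policy and $\bar V_c^{\hat\pi}(s)=\max_{\tilde f\in\mathcal{F}_n}\mathbb{E}_{\hat\pi}[\sum_{t\ge0}\gamma^tc(s_t,a_t)\mid s_0=s]$ with $s_{t+1}=\tilde f(s_t,a_t)+\omega_t$. The left-hand side of the claim equals the expected discounted cost from time $t+1$ on following $\hat\pi$ under the maximizing model $\tilde f$. *)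

theory Defs
  imports "HOL-Analysis.Analysis" "HOL-Probability.Probability"
begin

text \<open>Isotropic zero-mean Gaussian on real^'d with per-coordinate standard deviation sig
  (i.e. variance sig^2 times the identity).\<close>
definition gauss_noise :: "real \<Rightarrow> (real^'d) measure" where
  "gauss_noise sig =
     distr (PiM UNIV (\<lambda>i::'d. density lborel (normal_density 0 sig))) borel vec_lambda"

definition noise_seq :: "real \<Rightarrow> (nat \<Rightarrow> real^'d) measure" where
  "noise_seq sig = PiM UNIV (\<lambda>_::nat. gauss_noise sig)"

primrec traj :: "((real^'d) \<times> 'a \<Rightarrow> real^'d) \<Rightarrow> (real^'d \<Rightarrow> 'a) \<Rightarrow> real^'d
                 \<Rightarrow> (nat \<Rightarrow> real^'d) \<Rightarrow> nat \<Rightarrow> real^'d" where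
  "traj g pol s0 ws 0 = s0"
| "traj g pol s0 ws (Suc t) = g (traj g pol s0 ws t, pol (traj g pol s0 ws t)) + ws t"

definition value_c :: "real \<Rightarrow> real \<Rightarrow> ((real^'d) \<times> 'a \<Rightarrow> real)
     \<Rightarrow> ((real^'d) \<times> 'a \<Rightarrow> real^'d) \<Rightarrow> (real^'d \<Rightarrow> 'a) \<Rightarrow> real^'d \<Rightarrow> ennreal" where
  "value_c gam sig c g pol s =
     (\<integral>\<^sup>+ ws. (\<Sum>t. ennreal (gam ^ t * c (traj g pol s ws t, pol (traj g pol s ws t))))
        \<partial>noise_seq sig)"

text \<open>Model set F_n = intersection over n' <= n of
  F_n' = {g. |g - mu_n'| <= beta_n' sigma_n' componentwise on S x A}
  (models are required to be Borel measurable so that expectations make sense).\<close>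
definition model_set :: "'a::topological_space set \<Rightarrow> (nat \<Rightarrow> (real^'d) \<times> 'a \<Rightarrow> real^'d)
     \<Rightarrow> (nat \<Rightarrow> (real^'d) \<times> 'a \<Rightarrow> real^'d) \<Rightarrow> (nat \<Rightarrow> real) \<Rightarrow> nat
     \<Rightarrow> ((real^'d) \<times> 'a \<Rightarrow> real^'d) set" where
  "model_set A mu sn beta n =
     {g. g \<in> borel_measurable borel \<and>
         (\<forall>n'\<le>n. \<forall>s. \<forall>a\<in>A. \<forall>i. \<bar>g (s, a) $ i - mu n' (s, a) $ i\<bar> \<le> beta n' * sn n' (s, a) $ i)}"

definition pess_value :: "real \<Rightarrow> real \<Rightarrow> ((real^'d) \<times> 'a \<Rightarrow> real)
     \<Rightarrow> ((real^'d) \<times> 'a \<Rightarrow> real^'d) set \<Rightarrow> (real^'d \<Rightarrow> 'a) \<Rightarrow> real^'d \<Rightarrow> ennreal" where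
  "pess_value gam sig c F pol s = (SUP g\<in>F. value_c gam sig c g pol s)"

definition h0_eval :: "('x \<Rightarrow> 'x \<Rightarrow> real) \<Rightarrow> (real \<times> 'x) list \<Rightarrow> 'x \<Rightarrow> real" where
  "h0_eval k xs y = (\<Sum>(al, p)\<leftarrow>xs. al * k p y)"

definition h0_sqnorm :: "('x \<Rightarrow> 'x \<Rightarrow> real) \<Rightarrow> (real \<times> 'x) list \<Rightarrow> real" where
  "h0_sqnorm k xs = (\<Sum>(al, p)\<leftarrow>xs. \<Sum>(be, q)\<leftarrow>xs. al * be * k p q)"

definition pos_def_kernel :: "'x set \<Rightarrow> ('x \<Rightarrow> 'x \<Rightarrow> real) \<Rightarrow> bool" where
  "pos_def_kernel X k \<longleftrightarrow> (\<forall>x\<in>X. \<forall>y\<in>X. k x y = k y x) \<and>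
     (\<forall>xs. set (map snd xs) \<subseteq> X \<longrightarrow> 0 \<le> h0_sqnorm k xs)"

text \<open>h lies in the RKHS H_k on X with ||h||_k <= B: h is the pointwise limit of a Cauchy
  sequence of finite kernel expansions whose norms converge to a limit <= B.\<close>
definition in_rkhs_ball :: "'x set \<Rightarrow> ('x \<Rightarrow> 'x \<Rightarrow> real) \<Rightarrow> real \<Rightarrow> ('x \<Rightarrow> real) \<Rightarrow> bool" where
  "in_rkhs_ball X k B h \<longleftrightarrow>
     (\<exists>xs :: nat \<Rightarrow> (real \<times> 'x) list.
        (\<forall>n. set (map snd (xs n)) \<subseteq> X) \<and>
        (\<forall>e>0. \<exists>N. \<forall>m\<ge>N. \<forall>n\<ge>N.
            h0_sqnorm k (xs m @ map (\<lambda>(be, q). (- be, q)) (xs n)) < e) \<and>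
        (\<forall>y\<in>X. (\<lambda>n. h0_eval k (xs n) y) \<longlonglongrightarrow> h y) \<and>
        (\<exists>L. (\<lambda>n. sqrt (h0_sqnorm k (xs n))) \<longlonglongrightarrow> L \<and> L \<le> B))"

definition lambda_pess :: "real \<Rightarrow> real \<Rightarrow> real \<Rightarrow> real \<Rightarrow> nat \<Rightarrow> real \<Rightarrow> real" where
  "lambda_pess Cmax kmax gam betaN d sig =
     max Cmax kmax * (gam / (1 - gam)) * ((1 + sqrt (real d)) * betaN / sig)"

end

theory Submission
  imports Defs
begin


lemma shift1:
  fixes k :: "real \<Rightarrow> ennreal" and V sig a :: real
  assumes km[measurable]: "k \<in> borel_measurable borel" and kV: "\<And>y. k y \<le> ennreal V"
    and sig: "0 < sig" and V: "0 \<le> V"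
  shows "(\<integral>\<^sup>+y. k (y + a) \<partial>density lborel (normal_density 0 sig))
     \<le> (\<integral>\<^sup>+y. k y \<partial>density lborel (normal_density 0 sig)) + ennreal (V * \<bar>a\<bar> / sig)"
proof -
  define \<phi> where "\<phi> = normal_density 0 sig"
  have \<phi>m[measurable]: "\<phi> \<in> borel_measurable borel" unfolding \<phi>_def by simp
  have \<phi>0: "\<And>x. 0 \<le> \<phi> x" unfolding \<phi>_def by simp
  have \<phi>mono: "\<phi> x \<le> \<phi> y" if "y\<^sup>2 \<le> x\<^sup>2" for x y
    using that sig unfolding \<phi>_def normal_density_def
    by (auto intro!: mult_left_mono divide_right_mono simp: field_simps)
  have \<phi>strict: "\<phi> x < \<phi> y" if "y\<^sup>2 < x\<^sup>2" for x y
    using that sig unfolding \<phi>_def normal_density_def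
    by (auto intro!: mult_strict_left_mono divide_strict_right_mono simp: field_simps)
  have \<phi>max: "\<phi> x \<le> 1 / sig" for x
  proof -
    have "\<phi> x \<le> 1 / sqrt (2 * pi * sig\<^sup>2)"
      unfolding \<phi>_def normal_density_def
      by (simp add: divide_right_mono)
    also have "\<dots> \<le> 1 / sig"
    proof -
      have "sqrt (sig\<^sup>2) \<le> sqrt (2 * pi * sig\<^sup>2)"
        using pi_gt3 by (intro real_sqrt_le_mono) (auto intro!: mult_right_mono[of 1 "2*pi" "sig^2", simplified])
      then show ?thesis using sig by (simp add: frac_le)
    qed
    finally show ?thesis .
  qed
  define S where "S = {z::real. (z - a)\<^sup>2 < z\<^sup>2}"
  have Sm[measurable]: "S \<in> sets borel" unfolding S_def by measurable
  define D where "D = (\<integral>\<^sup>+z. indicator S z * ennreal (\<phi> (z - a) - \<phi> z) \<partial>lborel)"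
  have L: "(\<integral>\<^sup>+y. k (y + a) \<partial>density lborel \<phi>) = (\<integral>\<^sup>+z. k z * ennreal (\<phi> (z - a)) \<partial>lborel)"
  proof -
    have "(\<integral>\<^sup>+z. k z * ennreal (\<phi> (z - a)) \<partial>lborel) = ennreal \<bar>1\<bar> * (\<integral>\<^sup>+x. k (a + 1 * x) * ennreal (\<phi> (a + 1 * x - a)) \<partial>lborel)"
      by (rule nn_integral_real_affine) auto
    then show ?thesis by (simp add: nn_integral_density \<phi>0 add.commute mult.commute)
  qed
  have "(\<integral>\<^sup>+z. k z * ennreal (\<phi> (z - a)) \<partial>lborel)
      \<le> (\<integral>\<^sup>+z. k z * ennreal (\<phi> z) + ennreal V * (indicator S z * ennreal (\<phi> (z - a) - \<phi> z)) \<partial>lborel)"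
  proof (rule nn_integral_mono)
    fix z
    show "k z * ennreal (\<phi> (z - a)) \<le> k z * ennreal (\<phi> z) + ennreal V * (indicator S z * ennreal (\<phi> (z - a) - \<phi> z))"
    proof (cases "z \<in> S")
      case True
      then have lt: "\<phi> z < \<phi> (z - a)" using \<phi>strict unfolding S_def by auto
      have "k z * ennreal (\<phi> (z - a)) = k z * ennreal (\<phi> z) + k z * ennreal (\<phi> (z - a) - \<phi> z)"
        using lt \<phi>0 by (simp add: distrib_left[symmetric] ennreal_plus[symmetric] del: ennreal_plus)
      also have "\<dots> \<le> k z * ennreal (\<phi> z) + ennreal V * ennreal (\<phi> (z - a) - \<phi> z)"
        by (intro add_left_mono mult_right_mono kV) auto
      finally show ?thesis using True by simp
    next
      case False
      then have "\<phi> (z - a) \<le> \<phi> z" using \<phi>mono unfolding S_def by auto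
      then have "k z * ennreal (\<phi> (z - a)) \<le> k z * ennreal (\<phi> z)"
        by (intro mult_left_mono ennreal_leI) auto
      then show ?thesis using False by simp
    qed
  qed
  also have "\<dots> = (\<integral>\<^sup>+z. k z * ennreal (\<phi> z) \<partial>lborel) + ennreal V * D"
    unfolding D_def by (subst nn_integral_add) (auto simp: nn_integral_cmult)
  also have "(\<integral>\<^sup>+z. k z * ennreal (\<phi> z) \<partial>lborel) = (\<integral>\<^sup>+y. k y \<partial>density lborel \<phi>)"
    by (simp add: nn_integral_density \<phi>0 mult.commute)
  finally have main: "(\<integral>\<^sup>+y. k (y + a) \<partial>density lborel \<phi>) \<le> (\<integral>\<^sup>+y. k y \<partial>density lborel \<phi>) + ennreal V * D"
    using L by simp
  define I where "I = {- \<bar>a\<bar> / 2 .. \<bar>a\<bar> / 2}"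
  define P where "P = (\<integral>\<^sup>+z. indicator S z * ennreal (\<phi> z) \<partial>lborel)"
  have Pfin: "P \<noteq> \<infinity>"
  proof -
    have "P \<le> (\<integral>\<^sup>+z. ennreal (\<phi> z) \<partial>lborel)"
      unfolding P_def by (intro nn_integral_mono) (auto simp: indicator_def)
    also have "\<dots> = 1"
      unfolding \<phi>_def using integrable_normal_density[OF sig] integral_normal_density[OF sig] by (subst nn_integral_eq_integral) auto
    finally show ?thesis by (auto simp: top_unique)
  qed
  have "P + D = (\<integral>\<^sup>+z. indicator S z * ennreal (\<phi> (z - a)) \<partial>lborel)"
    unfolding P_def D_def
  proof (subst nn_integral_add[symmetric])
    show "(\<integral>\<^sup>+ x. indicator S x * ennreal (\<phi> x) + indicator S x * ennreal (\<phi> (x - a) - \<phi> x) \<partial>lborel) =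
        \<integral>\<^sup>+ z. indicator S z * ennreal (\<phi> (z - a)) \<partial>lborel"
    proof (intro nn_integral_cong)
      fix x show "indicator S x * ennreal (\<phi> x) + indicator S x * ennreal (\<phi> (x - a) - \<phi> x) = indicator S x * ennreal (\<phi> (x - a))"
      proof (cases "x \<in> S")
        case True
        then have lt: "\<phi> x < \<phi> (x - a)" using \<phi>strict unfolding S_def by auto
        then show ?thesis using True \<phi>0 by (simp add: ennreal_plus[symmetric] del: ennreal_plus)
      qed simp
    qed
  qed auto
  also have "\<dots> = ennreal \<bar>1\<bar> * (\<integral>\<^sup>+x. indicator S (a + 1 * x) * ennreal (\<phi> (a + 1 * x - a)) \<partial>lborel)"
    by (rule nn_integral_real_affine) auto
  also have "\<dots> \<le> (\<integral>\<^sup>+x. indicator S x * ennreal (\<phi> x) + indicator I x * ennreal (1 / sig) \<partial>lborel)"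
  proof -
    have "indicator S (a + x) * ennreal (\<phi> x) \<le> indicator S x * ennreal (\<phi> x) + indicator I x * ennreal (1 / sig)" for x
    proof (cases "a + x \<in> S")
      case True
      show ?thesis
      proof (cases "x \<in> S")
        case False
        have "x \<in> I"
        proof -
          have "x\<^sup>2 < (x + a)\<^sup>2" using True unfolding S_def by (simp add: add.commute)
          moreover have "\<not> (x - a)\<^sup>2 < x\<^sup>2" using False unfolding S_def by simp
          ultimately have "\<bar>2 * a * x\<bar> \<le> a\<^sup>2" by (auto simp: power2_eq_square algebra_simps abs_if)
          then have "\<bar>a\<bar> * (2 * \<bar>x\<bar>) \<le> \<bar>a\<bar> * \<bar>a\<bar>" by (simp add: abs_mult power2_eq_square)
          moreover have "a \<noteq> 0" using True False unfolding S_def by auto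
          ultimately have "2 * \<bar>x\<bar> \<le> \<bar>a\<bar>"
            by (metis abs_ge_zero abs_mult_self_eq mult_le_cancel_left_pos zero_less_abs_iff)
          then show ?thesis unfolding I_def by auto
        qed
        then show ?thesis using True False \<phi>max[of x] by (simp add: ennreal_leI)
      qed (simp add: True)
    qed simp
    then show ?thesis by (auto intro!: nn_integral_mono)
  qed
  also have "\<dots> = P + ennreal \<bar>a\<bar> * ennreal (1 / sig)"
    unfolding P_def I_def
    by (subst nn_integral_add) (auto simp: nn_integral_multc)
  finally have "D \<le> ennreal (\<bar>a\<bar> / sig)" using Pfin sig by (simp add: ennreal_mult[symmetric])
  then have "ennreal V * D \<le> ennreal V * ennreal (\<bar>a\<bar> / sig)" by (rule mult_left_mono) simp
  also have "ennreal V * ennreal (\<bar>a\<bar> / sig) = ennreal (V * \<bar>a\<bar> / sig)"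
    using V sig by (simp add: ennreal_mult[symmetric])
  finally have "ennreal V * D \<le> ennreal (V * \<bar>a\<bar> / sig)" .
  with main show ?thesis unfolding \<phi>_def by (meson add_left_mono order_trans)
qed



abbreviation "NN sig \<equiv> density lborel (normal_density 0 sig)"

lemma vec_lambda_sum: "vec_lambda x = (\<Sum>i\<in>UNIV. x i *\<^sub>R axis i (1::real))"
  by (simp add: vec_eq_iff sum_component axis_def if_distrib cong: if_cong)

lemma measurable_vec_lambda[measurable]:
  "(vec_lambda :: ('d::finite \<Rightarrow> real) \<Rightarrow> real^'d) \<in> measurable (PiM UNIV (\<lambda>_. NN sig)) borel"
proof -
  have "(\<lambda>x::'d\<Rightarrow>real. \<Sum>i\<in>UNIV. x i *\<^sub>R axis i (1::real)) \<in> measurable (PiM UNIV (\<lambda>_. NN sig)) borel"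
    by measurable
  then show ?thesis by (simp add: vec_lambda_sum[abs_def])
qed

lemma gauss_integral:
  assumes [measurable]: "h \<in> borel_measurable (borel :: (real^'d::finite) measure)" and sig: "0 < sig"
  shows "(\<integral>\<^sup>+om. h om \<partial>gauss_noise sig) = (\<integral>\<^sup>+x. h (vec_lambda x) \<partial>PiM UNIV (\<lambda>_::'d. NN sig))"
  unfolding gauss_noise_def using sig by (subst nn_integral_distr) auto

lemma prob_space_gauss: "0 < sig \<Longrightarrow> prob_space (gauss_noise sig :: (real^'d::finite) measure)"
  unfolding gauss_noise_def
  by (intro prob_space.prob_space_distr prob_space_PiM prob_space_normal_density) auto

lemma sets_gauss[simp, measurable_cong]: "sets (gauss_noise sig :: (real^'d::finite) measure) = sets borel"
  unfolding gauss_noise_def by simp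

lemma shift_axis:
  fixes h :: "real^'d::finite \<Rightarrow> ennreal"
  assumes hm[measurable]: "h \<in> borel_measurable borel" and hV: "\<And>y. h y \<le> ennreal V"
    and sig: "0 < sig" and V: "0 \<le> V"
  shows "(\<integral>\<^sup>+om. h (om + axis i a) \<partial>gauss_noise sig) \<le> (\<integral>\<^sup>+om. h om \<partial>gauss_noise sig) + ennreal (V * \<bar>a\<bar> / sig)"
proof -
  interpret PS: product_prob_space "\<lambda>_::'d. NN sig" "UNIV - {i}"
    using sig by (auto simp: product_prob_space_def product_prob_space_axioms_def product_sigma_finite_def
        prob_space_normal_density prob_space_imp_sigma_finite)
  have piI: "prob_space (PiM (UNIV - {i}) (\<lambda>_::'d. NN sig))"
    using sig by (intro prob_space_PiM prob_space_normal_density)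
  have U: "UNIV = insert i (UNIV - {i})" by auto
  define B where "B x = (\<integral>\<^sup>+y. h (vec_lambda (x(i := y))) \<partial>NN sig)" for x
  have kmeas[measurable]: "(\<lambda>y. h (vec_lambda (x(i := y)))) \<in> borel_measurable borel" for x :: "'d \<Rightarrow> real"
  proof -
    have eq: "(\<lambda>y. h (vec_lambda (x(i := y)))) = (\<lambda>y. h (vec_lambda (x(i := 0)) + y *\<^sub>R axis i (1::real)))"
      by (intro ext arg_cong[where f=h]) (auto simp: vec_eq_iff axis_def)
    show ?thesis unfolding eq by measurable
  qed
  have f1[measurable]: "(\<lambda>x. h (vec_lambda x + axis i a)) \<in> borel_measurable (PiM (insert i (UNIV - {i})) (\<lambda>_::'d. NN sig))"
    using U by (simp only: U[symmetric]) measurable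
  have f2[measurable]: "(\<lambda>x. h (vec_lambda x)) \<in> borel_measurable (PiM (insert i (UNIV - {i})) (\<lambda>_::'d. NN sig))"
    by (simp only: U[symmetric]) measurable
  have Bm[measurable]: "B \<in> borel_measurable (PiM (UNIV - {i}) (\<lambda>_::'d. NN sig))"
  proof -
    have "(\<lambda>(x, y). h (vec_lambda (x(i := y)))) \<in> borel_measurable (PiM (UNIV - {i}) (\<lambda>_::'d. NN sig) \<Otimes>\<^sub>M NN sig)"
    proof -
      have "(\<lambda>x. h (vec_lambda x)) \<circ> (\<lambda>(x, y). x(i := y)) \<in> borel_measurable (PiM (UNIV - {i}) (\<lambda>_::'d. NN sig) \<Otimes>\<^sub>M NN sig)"
        using measurable_add_dim[of i "UNIV - {i}" "\<lambda>_::'d. NN sig"] f2 by (rule measurable_comp)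
      then show ?thesis by (simp add: comp_def case_prod_unfold)
    qed
    then show ?thesis unfolding B_def
      by (rule sigma_finite_measure.borel_measurable_nn_integral[rotated])
         (simp add: sig prob_space_normal_density prob_space_imp_sigma_finite)
  qed
  have "(\<integral>\<^sup>+om. h (om + axis i a) \<partial>gauss_noise sig) = (\<integral>\<^sup>+x. h (vec_lambda x + axis i a) \<partial>PiM (insert i (UNIV - {i})) (\<lambda>_::'d. NN sig))"
    using sig by (subst gauss_integral) (auto simp: U[symmetric])
  also have "\<dots> = (\<integral>\<^sup>+x. (\<integral>\<^sup>+y. h (vec_lambda (x(i := y)) + axis i a) \<partial>NN sig) \<partial>PiM (UNIV - {i}) (\<lambda>_::'d. NN sig))"
    by (subst PS.product_nn_integral_insert) auto
  also have "\<dots> = (\<integral>\<^sup>+x. (\<integral>\<^sup>+y. h (vec_lambda (x(i := y + a))) \<partial>NN sig) \<partial>PiM (UNIV - {i}) (\<lambda>_::'d. NN sig))"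
    by (intro nn_integral_cong arg_cong[where f=h]) (auto simp: vec_eq_iff axis_def)
  also have "\<dots> \<le> (\<integral>\<^sup>+x. B x + ennreal (V * \<bar>a\<bar> / sig) \<partial>PiM (UNIV - {i}) (\<lambda>_::'d. NN sig))"
    unfolding B_def
    by (intro nn_integral_mono shift1[where k="\<lambda>y. h (vec_lambda (_(i := y)))", OF kmeas hV sig V])
  also have "\<dots> = (\<integral>\<^sup>+x. B x \<partial>PiM (UNIV - {i}) (\<lambda>_::'d. NN sig)) + ennreal (V * \<bar>a\<bar> / sig)"
    by (subst nn_integral_add) (auto simp: prob_space.emeasure_space_1[OF piI])
  also have "(\<integral>\<^sup>+x. B x \<partial>PiM (UNIV - {i}) (\<lambda>_::'d. NN sig)) = (\<integral>\<^sup>+x. h (vec_lambda x) \<partial>PiM (insert i (UNIV - {i})) (\<lambda>_::'d. NN sig))"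
    unfolding B_def by (subst PS.product_nn_integral_insert) auto
  also have "\<dots> = (\<integral>\<^sup>+om. h om \<partial>gauss_noise sig)"
    using sig by (subst gauss_integral) (auto simp: U[symmetric])
  finally show ?thesis .
qed



lemma shiftd:
  fixes h :: "real^'d::finite \<Rightarrow> ennreal"
  assumes hm[measurable]: "h \<in> borel_measurable borel" and hV: "\<And>y. h y \<le> ennreal V"
    and sig: "0 < sig" and V: "0 \<le> V"
  shows "(\<integral>\<^sup>+om. h (om + m) \<partial>gauss_noise sig) \<le> (\<integral>\<^sup>+om. h om \<partial>gauss_noise sig) + ennreal (V * (\<Sum>i\<in>UNIV. \<bar>m $ i\<bar>) / sig)"
proof -
  have "finite J \<Longrightarrow> (\<integral>\<^sup>+om. h (om + (\<chi> i. if i \<in> J then m $ i else 0)) \<partial>gauss_noise sig)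
      \<le> (\<integral>\<^sup>+om. h om \<partial>gauss_noise sig) + ennreal (V * (\<Sum>i\<in>J. \<bar>m $ i\<bar>) / sig)" for J
  proof (induction J rule: finite_induct)
    case empty
    have "(\<chi> i. if i \<in> {} then m $ i else 0) = 0" by (simp add: vec_eq_iff)
    then show ?case by simp
  next
    case (insert j J)
    define mJ where "mJ = (\<chi> i. if i \<in> J then m $ i else 0)"
    have eq: "(\<chi> i. if i \<in> insert j J then m $ i else 0) = mJ + axis j (m $ j)"
      using insert.hyps by (auto simp: vec_eq_iff mJ_def axis_def)
    have "(\<integral>\<^sup>+om. h (om + (\<chi> i. if i \<in> insert j J then m $ i else 0)) \<partial>gauss_noise sig)
        = (\<integral>\<^sup>+om. (\<lambda>x. h (x + mJ)) (om + axis j (m $ j)) \<partial>gauss_noise sig)"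
      unfolding eq by (simp add: ac_simps)
    also have "\<dots> \<le> (\<integral>\<^sup>+om. h (om + mJ) \<partial>gauss_noise sig) + ennreal (V * \<bar>m $ j\<bar> / sig)"
      by (rule shift_axis[OF _ hV sig V]) measurable
    also have "\<dots> \<le> (\<integral>\<^sup>+om. h om \<partial>gauss_noise sig) + ennreal (V * (\<Sum>i\<in>J. \<bar>m $ i\<bar>) / sig) + ennreal (V * \<bar>m $ j\<bar> / sig)"
      using insert.IH unfolding mJ_def by (rule add_right_mono)
    also have "\<dots> = (\<integral>\<^sup>+om. h om \<partial>gauss_noise sig) + ennreal (V * (\<Sum>i\<in>insert j J. \<bar>m $ i\<bar>) / sig)"
      using insert.hyps V sig
      by (simp add: add.assoc ennreal_plus[symmetric] sum_nonneg add_divide_distrib distrib_left del: ennreal_plus)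
    finally show ?case .
  qed
  from this[of UNIV] show ?thesis by (simp cong: if_cong)
qed



lemma prob_space_noise: "0 < sig \<Longrightarrow> prob_space (noise_seq sig :: (nat \<Rightarrow> real^'d::finite) measure)"
  unfolding noise_seq_def by (intro prob_space_PiM prob_space_gauss)

lemma shift_pair_meas:
  assumes sig: "0 < sig"
  shows "(\<lambda>ws::nat \<Rightarrow> real^'d::finite. (ws 0, \<lambda>j. ws (Suc j))) \<in> measurable (noise_seq sig) (gauss_noise sig \<Otimes>\<^sub>M noise_seq sig)"
proof -
  have sh: "(\<lambda>ws::nat \<Rightarrow> real^'d. \<lambda>j. ws (Suc j)) \<in> measurable (noise_seq sig) (noise_seq sig)"
    unfolding noise_seq_def
    by (rule measurable_PiM_single'[where f="\<lambda>j ws. ws (Suc j)"]) (auto simp: space_PiM)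
  have "(\<lambda>ws::nat \<Rightarrow> real^'d. ws 0) \<in> measurable (noise_seq sig) (gauss_noise sig)"
    unfolding noise_seq_def by measurable
  from measurable_Pair[OF this sh] show ?thesis .
qed

lemma seq_split:
  fixes Phi :: "real^'d::finite \<Rightarrow> (nat \<Rightarrow> real^'d) \<Rightarrow> ennreal"
  assumes sig: "0 < sig"
    and Pm[measurable]: "(\<lambda>(om, ws). Phi om ws) \<in> borel_measurable (gauss_noise sig \<Otimes>\<^sub>M noise_seq sig)"
  shows "(\<integral>\<^sup>+ws. Phi (ws 0) (\<lambda>j. ws (Suc j)) \<partial>noise_seq sig)
       = (\<integral>\<^sup>+om. (\<integral>\<^sup>+ws. Phi om ws \<partial>noise_seq sig) \<partial>gauss_noise sig)"
proof -
  interpret SS: sequence_space "gauss_noise sig :: (real^'d) measure"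
    by (simp add: sequence_space_def product_prob_space_def product_prob_space_axioms_def
        product_sigma_finite_def prob_space_gauss[OF sig] prob_space_imp_sigma_finite)
  interpret PSF: pair_sigma_finite "gauss_noise sig :: (real^'d) measure" "noise_seq sig"
    by (simp add: pair_sigma_finite_def prob_space_gauss[OF sig] prob_space_noise[OF sig] prob_space_imp_sigma_finite)
  have S: "noise_seq sig = SS.S" unfolding noise_seq_def ..
  have m1[measurable]: "(\<lambda>ws. Phi (ws 0) (\<lambda>j. ws (Suc j))) \<in> borel_measurable (noise_seq sig)"
  proof -
    have "(\<lambda>ws::nat \<Rightarrow> real^'d. (ws 0, \<lambda>j. ws (Suc j))) \<in> measurable (noise_seq sig) (gauss_noise sig \<Otimes>\<^sub>M noise_seq sig)"
    proof -
      have sh: "(\<lambda>ws::nat \<Rightarrow> real^'d. \<lambda>j. ws (Suc j)) \<in> measurable (noise_seq sig) (noise_seq sig)"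
        unfolding noise_seq_def
        by (rule measurable_PiM_single'[where f="\<lambda>j ws. ws (Suc j)"]) (auto simp: space_PiM)
      have "(\<lambda>ws::nat \<Rightarrow> real^'d. ws 0) \<in> measurable (noise_seq sig) (gauss_noise sig)"
        unfolding noise_seq_def by measurable
      from measurable_Pair[OF this sh] show ?thesis .
    qed
    from measurable_comp[OF this Pm] show ?thesis by (simp add: comp_def)
  qed
  have "(\<integral>\<^sup>+ws. Phi (ws 0) (\<lambda>j. ws (Suc j)) \<partial>noise_seq sig)
      = (\<integral>\<^sup>+ws. Phi (ws 0) (\<lambda>j. ws (Suc j)) \<partial>distr (gauss_noise sig \<Otimes>\<^sub>M SS.S) SS.S (\<lambda>(s, \<omega>). case_nat s \<omega>))"
    by (simp add: SS.PiM_iter S)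
  also have "\<dots> = (\<integral>\<^sup>+p. Phi (fst p) (snd p) \<partial>(gauss_noise sig \<Otimes>\<^sub>M SS.S))"
  proof -
    have cn: "(\<lambda>p. case_nat (fst p) (snd p)) \<in> measurable (gauss_noise sig \<Otimes>\<^sub>M SS.S) SS.S"
      by (rule measurable_case_nat'[OF measurable_fst measurable_snd])
    then show ?thesis
      by (subst nn_integral_distr) (auto simp: S[symmetric] case_prod_unfold)
  qed
  also have "\<dots> = (\<integral>\<^sup>+om. (\<integral>\<^sup>+ws. Phi om ws \<partial>noise_seq sig) \<partial>gauss_noise sig)"
  proof -
    have Pm': "(\<lambda>p. Phi (fst p) (snd p)) \<in> borel_measurable (gauss_noise sig \<Otimes>\<^sub>M noise_seq sig)"
      using Pm by (simp add: case_prod_unfold)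
    show ?thesis using sigma_finite_measure.nn_integral_fst[OF prob_space_imp_sigma_finite[OF prob_space_noise[OF sig]] Pm'] by (simp add: S)
  qed
  finally show ?thesis .
qed

lemma traj_Suc_shift:
  "traj g pol x ws (Suc t) = traj g pol (g (x, pol x) + ws 0) (\<lambda>j. ws (Suc j)) t"
  by (induction t) auto

lemma traj_measurable[measurable]:
  fixes g :: "(real^'d::finite) \<times> 'a::euclidean_space \<Rightarrow> real^'d"
  assumes sig: "0 < sig" and gm[measurable]: "g \<in> borel_measurable borel"
    and pm[measurable]: "pol \<in> borel_measurable borel"
    and X[measurable]: "X \<in> borel_measurable M" and W[measurable]: "W \<in> measurable M (noise_seq sig)"
  shows "(\<lambda>p. traj g pol (X p) (W p) t) \<in> borel_measurable M"
proof (induction t)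
  case 0 then show ?case by simp
next
  case (Suc t)
  have c: "(\<lambda>p. W p t) \<in> borel_measurable M"
  proof -
    have "(\<lambda>ws. ws t) \<in> measurable (noise_seq sig) (gauss_noise sig :: (real^'d) measure)"
      unfolding noise_seq_def by measurable
    then have "(\<lambda>ws. ws t) \<in> measurable (noise_seq sig) (borel :: (real^'d) measure)"
      using sets_gauss measurable_cong_sets by blast
    from measurable_comp[OF W this] show ?thesis by (simp add: comp_def)
  qed
  have p: "(\<lambda>p. (traj g pol (X p) (W p) t, pol (traj g pol (X p) (W p) t))) \<in> borel_measurable M"
  proof -
    have pt: "(\<lambda>x. pol (traj g pol (X x) (W x) t)) \<in> borel_measurable M"
      using measurable_comp[OF Suc pm] by (simp add: comp_def)
    show ?thesis using Suc pt by (subst borel_prod[symmetric]) measurable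
  qed
  have "(\<lambda>p. g (traj g pol (X p) (W p) t, pol (traj g pol (X p) (W p) t))) \<in> borel_measurable M"
    using measurable_comp[OF p gm] by (simp add: comp_def)
  then show ?case using c by simp
qed

definition Jv :: "real \<Rightarrow> real \<Rightarrow> ((real^'d) \<times> 'a \<Rightarrow> real^'d) \<Rightarrow> (real^'d \<Rightarrow> 'a) \<Rightarrow> (real^'d \<Rightarrow> real) \<Rightarrow> real^'d \<Rightarrow> ennreal" where
  "Jv gam sig g pol r x = (\<integral>\<^sup>+ ws. (\<Sum>t. ennreal (gam ^ t * r (traj g pol x ws t))) \<partial>noise_seq sig)"

definition JT :: "real \<Rightarrow> real \<Rightarrow> ((real^'d) \<times> 'a \<Rightarrow> real^'d) \<Rightarrow> (real^'d \<Rightarrow> 'a) \<Rightarrow> (real^'d \<Rightarrow> real) \<Rightarrow> nat \<Rightarrow> real^'d \<Rightarrow> ennreal" where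
  "JT gam sig g pol r T x = (\<integral>\<^sup>+ ws. (\<Sum>t<T. ennreal (gam ^ t * r (traj g pol x ws t))) \<partial>noise_seq sig)"

context
  fixes g :: "(real^'d::finite) \<times> 'a::euclidean_space \<Rightarrow> real^'d" and pol :: "real^'d \<Rightarrow> 'a"
    and r :: "real^'d \<Rightarrow> real" and gam sig :: real
  assumes sig: "0 < sig" and gam: "0 \<le> gam"
    and gm[measurable]: "g \<in> borel_measurable borel"
    and pm[measurable]: "pol \<in> borel_measurable borel"
    and rm[measurable]: "r \<in> borel_measurable borel"
    and r0: "\<And>x. 0 \<le> r x"
begin

lemma traj_meas_fixed[measurable]: "(\<lambda>ws. traj g pol x ws t) \<in> borel_measurable (noise_seq sig)"
  using traj_measurable[OF sig gm pm, of "\<lambda>_. x" "noise_seq sig" "\<lambda>ws. ws"] by simp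

lemma traj_meas_pair[measurable]:
  "(\<lambda>p. traj g pol (fst p) (snd p) t) \<in> borel_measurable (borel \<Otimes>\<^sub>M noise_seq sig)"
  by (rule traj_measurable[OF sig gm pm]) measurable

lemma Jv_measurable[measurable]: "Jv gam sig g pol r \<in> borel_measurable borel"
proof -
  interpret NS: prob_space "noise_seq sig :: (nat \<Rightarrow> real^'d) measure" by (rule prob_space_noise[OF sig])
  have "(\<lambda>(x, ws). (\<Sum>t. ennreal (gam ^ t * r (traj g pol x ws t)))) \<in> borel_measurable (borel \<Otimes>\<^sub>M noise_seq sig)"
    unfolding case_prod_unfold by measurable
  then show ?thesis unfolding Jv_def[abs_def]
    by (rule NS.borel_measurable_nn_integral)
qed

lemma Jv_bellman:
  "Jv gam sig g pol r x = ennreal (r x) + ennreal gam * (\<integral>\<^sup>+om. Jv gam sig g pol r (g (x, pol x) + om) \<partial>gauss_noise sig)"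
proof -
  interpret NS: prob_space "noise_seq sig :: (nat \<Rightarrow> real^'d) measure" by (rule prob_space_noise[OF sig])
  have XG: "(\<lambda>p. g (x, pol x) + fst p) \<in> borel_measurable (gauss_noise sig \<Otimes>\<^sub>M noise_seq sig)"
  proof -
    have "fst \<in> measurable (gauss_noise sig \<Otimes>\<^sub>M noise_seq sig) (gauss_noise sig :: (real^'d) measure)"
      by (rule measurable_fst)
    then have "(fst :: (real^'d) \<times> (nat \<Rightarrow> real^'d) \<Rightarrow> real^'d) \<in> borel_measurable (gauss_noise sig \<Otimes>\<^sub>M noise_seq sig)"
      using sets_gauss measurable_cong_sets by blast
    then show ?thesis by measurable
  qed
  define Phi where "Phi om ws = (\<Sum>t. ennreal (gam ^ t * r (traj g pol (g (x, pol x) + om) ws t)))" for om ws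
  have "(\<Sum>t. ennreal (gam ^ t * r (traj g pol x ws t))) = ennreal (r x) + ennreal gam * Phi (ws 0) (\<lambda>j. ws (Suc j))" for ws
  proof -
    have "(\<Sum>t. ennreal (gam ^ t * r (traj g pol x ws t))) = (\<Sum>t. ennreal (gam ^ (Suc t) * r (traj g pol x ws (Suc t)))) + ennreal (gam ^ 0 * r (traj g pol x ws 0))"
      using sums_unique[OF sums_Suc[OF summable_sums[OF summableI[of "\<lambda>t. ennreal (gam ^ (Suc t) * r (traj g pol x ws (Suc t)))"]]]] by simp
    also have "(\<Sum>t. ennreal (gam ^ (Suc t) * r (traj g pol x ws (Suc t)))) = ennreal gam * Phi (ws 0) (\<lambda>j. ws (Suc j))"
      unfolding Phi_def ennreal_suminf_cmult[symmetric]
      by (intro suminf_cong) (simp add: traj_Suc_shift ennreal_mult[symmetric] gam r0 mult.assoc del: traj.simps)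
    finally show ?thesis by (simp add: add.commute)
  qed
  then have "Jv gam sig g pol r x = (\<integral>\<^sup>+ws. ennreal (r x) + ennreal gam * Phi (ws 0) (\<lambda>j. ws (Suc j)) \<partial>noise_seq sig)"
    unfolding Jv_def by simp
  also have "\<dots> = ennreal (r x) + ennreal gam * (\<integral>\<^sup>+ws. Phi (ws 0) (\<lambda>j. ws (Suc j)) \<partial>noise_seq sig)"
  proof -
    have Pm: "(\<lambda>(om, ws). Phi om ws) \<in> borel_measurable (gauss_noise sig \<Otimes>\<^sub>M noise_seq sig)"
    proof -
      have "(\<lambda>p. traj g pol (g (x, pol x) + fst p) (snd p) t) \<in> borel_measurable (gauss_noise sig \<Otimes>\<^sub>M noise_seq sig)" for t
        by (rule traj_measurable[OF sig gm pm]) (simp_all add: XG)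
      then show ?thesis unfolding Phi_def case_prod_unfold by measurable
    qed
    have m: "(\<lambda>ws. Phi (ws 0) (\<lambda>j. ws (Suc j))) \<in> borel_measurable (noise_seq sig)"
      using measurable_comp[OF shift_pair_meas[OF sig] Pm] by (simp add: comp_def)
    then show ?thesis
      by (subst nn_integral_add) (auto simp: nn_integral_cmult NS.emeasure_space_1)
  qed
  also have "(\<integral>\<^sup>+ws. Phi (ws 0) (\<lambda>j. ws (Suc j)) \<partial>noise_seq sig) = (\<integral>\<^sup>+om. (\<integral>\<^sup>+ws. Phi om ws \<partial>noise_seq sig) \<partial>gauss_noise sig)"
  proof (rule seq_split[OF sig])
    have "(\<lambda>p. traj g pol (g (x, pol x) + fst p) (snd p) t) \<in> borel_measurable (gauss_noise sig \<Otimes>\<^sub>M noise_seq sig)" for t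
      by (rule traj_measurable[OF sig gm pm]) (simp_all add: XG)
    then show "(\<lambda>(om, ws). Phi om ws) \<in> borel_measurable (gauss_noise sig \<Otimes>\<^sub>M noise_seq sig)"
      unfolding Phi_def case_prod_unfold by measurable
  qed
  also have "(\<integral>\<^sup>+om. (\<integral>\<^sup>+ws. Phi om ws \<partial>noise_seq sig) \<partial>gauss_noise sig) = (\<integral>\<^sup>+om. Jv gam sig g pol r (g (x, pol x) + om) \<partial>gauss_noise sig)"
    unfolding Phi_def Jv_def ..
  finally show ?thesis .
qed

end



context
  fixes g :: "(real^'d::finite) \<times> 'a::euclidean_space \<Rightarrow> real^'d" and pol :: "real^'d \<Rightarrow> 'a"
    and r :: "real^'d \<Rightarrow> real" and gam sig :: real
  assumes sig: "0 < sig" and gam: "0 \<le> gam"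
    and gm[measurable]: "g \<in> borel_measurable borel"
    and pm[measurable]: "pol \<in> borel_measurable borel"
    and rm[measurable]: "r \<in> borel_measurable borel"
    and r0: "\<And>x. 0 \<le> r x"
begin

lemma tm[measurable]: "(\<lambda>ws. traj g pol x ws t) \<in> borel_measurable (noise_seq sig)"
  using traj_measurable[OF sig gm pm, of "\<lambda>_. x" "noise_seq sig" "\<lambda>ws. ws"] by simp

lemma integrand_meas: "(\<lambda>ws. \<Sum>t. ennreal (gam ^ t * r (traj g pol x ws t))) \<in> borel_measurable (noise_seq sig)"
  by measurable

lemma JT_bellman:
  "JT gam sig g pol r (Suc T) x = ennreal (r x) + ennreal gam * (\<integral>\<^sup>+om. JT gam sig g pol r T (g (x, pol x) + om) \<partial>gauss_noise sig)"
proof -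
  interpret NS: prob_space "noise_seq sig :: (nat \<Rightarrow> real^'d) measure" by (rule prob_space_noise[OF sig])
  have XG: "(\<lambda>p. g (x, pol x) + fst p) \<in> borel_measurable (gauss_noise sig \<Otimes>\<^sub>M noise_seq sig)"
  proof -
    have "fst \<in> measurable (gauss_noise sig \<Otimes>\<^sub>M noise_seq sig) (gauss_noise sig :: (real^'d) measure)"
      by (rule measurable_fst)
    then have "(fst :: (real^'d) \<times> (nat \<Rightarrow> real^'d) \<Rightarrow> real^'d) \<in> borel_measurable (gauss_noise sig \<Otimes>\<^sub>M noise_seq sig)"
      using sets_gauss measurable_cong_sets by blast
    then show ?thesis by measurable
  qed
  define Phi where "Phi om ws = (\<Sum>t<T. ennreal (gam ^ t * r (traj g pol (g (x, pol x) + om) ws t)))" for om ws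
  have Pm: "(\<lambda>(om, ws). Phi om ws) \<in> borel_measurable (gauss_noise sig \<Otimes>\<^sub>M noise_seq sig)"
  proof -
    have "(\<lambda>p. traj g pol (g (x, pol x) + fst p) (snd p) t) \<in> borel_measurable (gauss_noise sig \<Otimes>\<^sub>M noise_seq sig)" for t
      by (rule traj_measurable[OF sig gm pm]) (simp_all add: XG)
    then show ?thesis unfolding Phi_def case_prod_unfold by measurable
  qed
  have "(\<Sum>t<Suc T. ennreal (gam ^ t * r (traj g pol x ws t))) = ennreal (r x) + ennreal gam * Phi (ws 0) (\<lambda>j. ws (Suc j))" for ws
  proof -
    have "(\<Sum>t<Suc T. ennreal (gam ^ t * r (traj g pol x ws t))) = ennreal (gam ^ 0 * r (traj g pol x ws 0)) + (\<Sum>t<T. ennreal (gam ^ (Suc t) * r (traj g pol x ws (Suc t))))"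
      by (rule sum.lessThan_Suc_shift)
    also have "(\<Sum>t<T. ennreal (gam ^ (Suc t) * r (traj g pol x ws (Suc t)))) = ennreal gam * Phi (ws 0) (\<lambda>j. ws (Suc j))"
      unfolding Phi_def sum_distrib_left
      by (intro sum.cong) (simp_all add: traj_Suc_shift ennreal_mult[symmetric] gam r0 mult.assoc del: traj.simps)
    finally show ?thesis by simp
  qed
  then have "JT gam sig g pol r (Suc T) x = (\<integral>\<^sup>+ws. ennreal (r x) + ennreal gam * Phi (ws 0) (\<lambda>j. ws (Suc j)) \<partial>noise_seq sig)"
    unfolding JT_def by simp
  also have "\<dots> = ennreal (r x) + ennreal gam * (\<integral>\<^sup>+ws. Phi (ws 0) (\<lambda>j. ws (Suc j)) \<partial>noise_seq sig)"
  proof -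
    have m: "(\<lambda>ws. Phi (ws 0) (\<lambda>j. ws (Suc j))) \<in> borel_measurable (noise_seq sig)"
      using measurable_comp[OF shift_pair_meas[OF sig] Pm] by (simp add: comp_def)
    then show ?thesis
      by (subst nn_integral_add) (auto simp: nn_integral_cmult NS.emeasure_space_1)
  qed
  also have "(\<integral>\<^sup>+ws. Phi (ws 0) (\<lambda>j. ws (Suc j)) \<partial>noise_seq sig) = (\<integral>\<^sup>+om. (\<integral>\<^sup>+ws. Phi om ws \<partial>noise_seq sig) \<partial>gauss_noise sig)"
    by (rule seq_split[OF sig Pm])
  also have "(\<integral>\<^sup>+om. (\<integral>\<^sup>+ws. Phi om ws \<partial>noise_seq sig) \<partial>gauss_noise sig) = (\<integral>\<^sup>+om. JT gam sig g pol r T (g (x, pol x) + om) \<partial>gauss_noise sig)"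
    unfolding Phi_def JT_def ..
  finally show ?thesis .
qed

lemma Jv_le_JT:
  assumes "\<And>T. JT gam sig g pol r T x \<le> B"
  shows "Jv gam sig g pol r x \<le> B"
proof -
  have "Jv gam sig g pol r x = (\<Sum>t. (\<integral>\<^sup>+ws. ennreal (gam ^ t * r (traj g pol x ws t)) \<partial>noise_seq sig))"
    unfolding Jv_def by (rule nn_integral_suminf) measurable
  also have "\<dots> \<le> B"
  proof (rule suminf_le_const[OF summableI])
    fix T
    have "(\<Sum>t<T. (\<integral>\<^sup>+ws. ennreal (gam ^ t * r (traj g pol x ws t)) \<partial>noise_seq sig)) = JT gam sig g pol r T x"
      unfolding JT_def by (rule nn_integral_sum[symmetric]) measurable
    then show "(\<Sum>t<T. (\<integral>\<^sup>+ws. ennreal (gam ^ t * r (traj g pol x ws t)) \<partial>noise_seq sig)) \<le> B"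
      using assms by simp
  qed
  finally show ?thesis .
qed

lemma JT_le_max:
  assumes rC: "\<And>y. r y \<le> C" and gam1: "gam < 1"
  shows "JT gam sig g pol r T x \<le> ennreal (C / (1 - gam))"
proof -
  interpret NS: prob_space "noise_seq sig :: (nat \<Rightarrow> real^'d) measure" by (rule prob_space_noise[OF sig])
  have C0: "0 \<le> C" using r0 rC order_trans by blast
  have bnd: "(\<Sum>t<T. ennreal (gam ^ t * r (traj g pol x ws t))) \<le> ennreal (C / (1 - gam))" for ws
  proof -
    have "(\<Sum>t<T. ennreal (gam ^ t * r (traj g pol x ws t))) = ennreal (\<Sum>t<T. gam ^ t * r (traj g pol x ws t))"
      using gam r0 by (intro sum_ennreal) simp
    also have "(\<Sum>t<T. gam ^ t * r (traj g pol x ws t)) \<le> (\<Sum>t<T. gam ^ t * C)"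
      using gam rC by (intro sum_mono mult_left_mono) auto
    also have "\<dots> = C * (\<Sum>t<T. gam ^ t)"
      by (simp add: sum_distrib_left mult.commute)
    also have "\<dots> = C * ((1 - gam ^ T) / (1 - gam))"
      using gam1 by (simp add: sum_gp_strict)
    also have "\<dots> \<le> C * (1 / (1 - gam))"
      using gam gam1 C0 by (intro mult_left_mono divide_right_mono) auto
    finally show ?thesis by (simp add: ennreal_leI)
  qed
  have "JT gam sig g pol r T x \<le> (\<integral>\<^sup>+ws. ennreal (C / (1 - gam)) \<partial>(noise_seq sig :: (nat \<Rightarrow> real^'d) measure))"
    unfolding JT_def by (rule nn_integral_mono) (rule bnd)
  also have "\<dots> = ennreal (C / (1 - gam))" by (simp add: NS.emeasure_space_1)
  finally show ?thesis .
qed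

end



lemma cc_meas:
  fixes c :: "(real^'d::finite) \<times> 'a::euclidean_space \<Rightarrow> real"
  assumes cont: "continuous_on (UNIV \<times> A) c" and A: "closed A"
    and pm[measurable]: "pol \<in> borel_measurable borel" and pA: "\<And>s. pol s \<in> A"
  shows "(\<lambda>y. c (y, pol y)) \<in> borel_measurable borel"
proof -
  have S: "UNIV \<times> A \<in> sets borel" using A by (intro borel_closed closed_Times) auto
  have c'[measurable]: "(\<lambda>p. indicator (UNIV \<times> A) p *\<^sub>R c p) \<in> borel_measurable borel"
    by (rule borel_measurable_continuous_on_indicator[OF S cont])
  have p: "(\<lambda>y::real^'d. (y, pol y)) \<in> borel_measurable borel"
    by (subst borel_prod[symmetric]) measurable
  have "(\<lambda>y. indicator (UNIV \<times> A) (y, pol y) *\<^sub>R c (y, pol y)) \<in> borel_measurable borel"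
    using measurable_comp[OF p c'] by (simp add: comp_def)
  moreover have "(\<lambda>y. indicator (UNIV \<times> A) (y, pol y) *\<^sub>R c (y, pol y)) = (\<lambda>y. c (y, pol y))"
    using pA by (auto simp: indicator_def)
  ultimately show ?thesis by simp
qed

lemma sum_le_sqrt_card_norm:
  fixes x :: "real^'d::finite"
  shows "(\<Sum>i\<in>UNIV. \<bar>x $ i\<bar>) \<le> sqrt (real CARD('d)) * norm x"
proof -
  have "(\<Sum>i\<in>UNIV. \<bar>x $ i\<bar> * \<bar>1::real\<bar>) \<le> L2_set (\<lambda>i. x $ i) UNIV * L2_set (\<lambda>_. 1::real) (UNIV :: 'd set)"
    using L2_set_mult_ineq[of "\<lambda>i. x $ i" "\<lambda>_. 1" UNIV] by simp
  moreover have "L2_set (\<lambda>i. x $ i) UNIV = norm x"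
    unfolding norm_vec_def L2_set_def by simp
  moreover have "L2_set (\<lambda>_. 1::real) (UNIV :: 'd set) = sqrt (real CARD('d))"
    by (simp add: L2_set_constant)
  ultimately show ?thesis by (simp add: mult.commute)
qed



lemma core:
  fixes c :: "(real^'d::finite) \<times> 'a::euclidean_space \<Rightarrow> real"
    and pol :: "real^'d \<Rightarrow> 'a" and A :: "'a set"
    and mu0 sn0 :: "nat \<Rightarrow> (real^'d) \<times> 'a \<Rightarrow> real^'d" and beta :: "nat \<Rightarrow> real"
  assumes sig: "0 < sig" and gam: "0 < gam" "gam < 1"
    and pA: "\<And>s. pol s \<in> A" and pm[measurable]: "pol \<in> borel_measurable borel"
    and ccm[measurable]: "(\<lambda>y. c (y, pol y)) \<in> borel_measurable borel"
    and cost: "\<forall>s. \<forall>a\<in>A. 0 \<le> c (s, a) \<and> c (s, a) \<le> Cmax"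
    and mum[measurable]: "mu0 n \<in> borel_measurable borel" and snm[measurable]: "sn0 n \<in> borel_measurable borel"
    and sn0: "\<And>x i. 0 \<le> sn0 n x $ i"
    and beta: "mono beta" "\<And>n. 0 \<le> beta n" and nN: "n \<le> N" and aA: "a \<in> A"
    and lam_def: "lam = lambda_pess Cmax kmax gam (beta N) CARD('d) sig"
    and F_def: "F = model_set A mu0 sn0 beta n"
  shows "ennreal (gam ^ Suc t) *
           (SUP g\<in>F. \<integral>\<^sup>+ om. pess_value gam sig c F pol (g (s, a) + om) \<partial>gauss_noise sig)
         \<le> ennreal (gam ^ t * lam * norm (sn0 n (s, a))) +
           (\<integral>\<^sup>+ ws. (\<Sum>\<tau>. ennreal (gam ^ (Suc t + \<tau>) *
               (c (traj (mu0 n) pol (mu0 n (s, a) + ws 0) (\<lambda>j. ws (Suc j)) \<tau>,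
                   pol (traj (mu0 n) pol (mu0 n (s, a) + ws 0) (\<lambda>j. ws (Suc j)) \<tau>))
                + lam * norm (sn0 n
                  (traj (mu0 n) pol (mu0 n (s, a) + ws 0) (\<lambda>j. ws (Suc j)) \<tau>,
                   pol (traj (mu0 n) pol (mu0 n (s, a) + ws 0) (\<lambda>j. ws (Suc j)) \<tau>))))))
            \<partial>noise_seq sig)"
proof -
  define \<mu> where "\<mu> = mu0 n"
  define \<sigma> where "\<sigma> = sn0 n"
  have [measurable]: "\<mu> \<in> borel_measurable borel" "\<sigma> \<in> borel_measurable borel"
    unfolding \<mu>_def \<sigma>_def by (rule mum snm)+
  define cc where "cc y = c (y, pol y)" for y
  have ccm'[measurable]: "cc \<in> borel_measurable borel" unfolding cc_def[abs_def] by (rule ccm)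
  have cc0: "0 \<le> cc y" and ccC: "cc y \<le> Cmax" for y
    using cost pA unfolding cc_def by auto
  have C0: "0 \<le> Cmax" using cc0 ccC order_trans by blast
  have lam0: "0 \<le> lam"
    unfolding lam_def lambda_pess_def using C0 gam sig beta(2)[of N]
    by (intro mult_nonneg_nonneg divide_nonneg_nonneg) auto
  define ell where "ell y = cc y + lam * norm (\<sigma> (y, pol y))" for y
  have ellm[measurable]: "ell \<in> borel_measurable borel"
  proof -
    have p: "(\<lambda>y::real^'d. (y, pol y)) \<in> borel_measurable borel"
      by (subst borel_prod[symmetric]) measurable
    have "(\<lambda>y. \<sigma> (y, pol y)) \<in> borel_measurable borel"
      using measurable_comp[OF p \<open>\<sigma> \<in> borel_measurable borel\<close>] by (simp add: comp_def)
    then show ?thesis unfolding ell_def[abs_def] by measurable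
  qed
  have ell0: "0 \<le> ell y" for y unfolding ell_def using cc0 lam0 by simp
  define U where "U = Jv gam sig \<mu> pol ell"
  have Um[measurable]: "U \<in> borel_measurable borel"
    unfolding U_def by (rule Jv_measurable[OF sig _ _ pm ellm ell0]) (use gam in auto)
  define Vmax where "Vmax = Cmax / (1 - gam)"
  have Vmax0: "0 \<le> Vmax" unfolding Vmax_def using C0 gam by simp
  define W where "W y = min (U y) (ennreal Vmax)" for y
  have Wm[measurable]: "W \<in> borel_measurable borel" unfolding W_def[abs_def] by measurable
  have WV: "W y \<le> ennreal Vmax" for y unfolding W_def by simp
  have WU: "W y \<le> U y" for y unfolding W_def by simp
  have Fm: "g \<in> borel_measurable borel" if "g \<in> F" for g
    using that unfolding F_def model_set_def by auto
  have KN: "gam * Vmax * (\<Sum>i\<in>UNIV. \<bar>(g (x, b) - \<mu> (x, b)) $ i\<bar>) / sig \<le> lam * norm (\<sigma> (x, b))"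
    if g: "g \<in> F" and b: "b \<in> A" for g x b
  proof -
    define X where "X = (\<Sum>i\<in>UNIV. \<bar>(g (x, b) - \<mu> (x, b)) $ i\<bar>)"
    have X0: "0 \<le> X" unfolding X_def by (simp add: sum_nonneg)
    have "X \<le> (\<Sum>i\<in>UNIV. beta n * \<sigma> (x, b) $ i)"
      unfolding X_def using g b unfolding F_def model_set_def \<mu>_def \<sigma>_def
      by (intro sum_mono) auto
    also have "\<dots> = beta n * (\<Sum>i\<in>UNIV. \<bar>\<sigma> (x, b) $ i\<bar>)"
      using sn0 unfolding \<sigma>_def by (simp add: sum_distrib_left)
    also have "\<dots> \<le> beta N * (\<Sum>i\<in>UNIV. \<bar>\<sigma> (x, b) $ i\<bar>)"
      using beta nN by (intro mult_right_mono) (auto simp: mono_def sum_nonneg)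
    also have "\<dots> \<le> beta N * (sqrt (real CARD('d)) * norm (\<sigma> (x, b)))"
      using beta(2)[of N] by (intro mult_left_mono sum_le_sqrt_card_norm) auto
    also have "\<dots> \<le> beta N * ((1 + sqrt (real CARD('d))) * norm (\<sigma> (x, b)))"
      using beta(2)[of N] by (intro mult_left_mono mult_right_mono) auto
    finally have Xle: "X \<le> (1 + sqrt (real CARD('d))) * beta N * norm (\<sigma> (x, b))" by (simp add: ac_simps)
    have Cle: "Cmax \<le> max Cmax kmax" by simp
    have K0: "0 \<le> gam / ((1 - gam) * sig)" using gam sig by simp
    have "gam * Vmax * X / sig = (Cmax * X) * (gam / ((1 - gam) * sig))"
      unfolding Vmax_def using gam sig by (simp add: field_simps)
    also have "\<dots> \<le> (max Cmax kmax * ((1 + sqrt (real CARD('d))) * beta N * norm (\<sigma> (x, b)))) * (gam / ((1 - gam) * sig))"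
      using Cle Xle X0 C0 K0 by (intro mult_right_mono mult_mono) auto
    also have "\<dots> = lam * norm (\<sigma> (x, b))"
      unfolding lam_def lambda_pess_def using gam sig by (simp add: field_simps)
    finally show ?thesis unfolding X_def .
  qed
  \<comment> \<open>total variation step\<close>
  have TV: "ennreal gam * (\<integral>\<^sup>+om. W (g (x, b) + om) \<partial>gauss_noise sig)
      \<le> ennreal gam * (\<integral>\<^sup>+om. U (\<mu> (x, b) + om) \<partial>gauss_noise sig) + ennreal (lam * norm (\<sigma> (x, b)))"
    if g: "g \<in> F" and b: "b \<in> A" for g x b
  proof -
    define m where "m = g (x, b) - \<mu> (x, b)"
    have "(\<integral>\<^sup>+om. W (g (x, b) + om) \<partial>gauss_noise sig) = (\<integral>\<^sup>+om. (\<lambda>y. W (\<mu> (x, b) + y)) (om + m) \<partial>gauss_noise sig)"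
      unfolding m_def by (simp add: algebra_simps)
    also have "\<dots> \<le> (\<integral>\<^sup>+om. W (\<mu> (x, b) + om) \<partial>gauss_noise sig) + ennreal (Vmax * (\<Sum>i\<in>UNIV. \<bar>m $ i\<bar>) / sig)"
      by (rule shiftd[OF _ WV sig Vmax0]) measurable
    also have "\<dots> \<le> (\<integral>\<^sup>+om. U (\<mu> (x, b) + om) \<partial>gauss_noise sig) + ennreal (Vmax * (\<Sum>i\<in>UNIV. \<bar>m $ i\<bar>) / sig)"
      by (intro add_right_mono nn_integral_mono WU)
    finally have "ennreal gam * (\<integral>\<^sup>+om. W (g (x, b) + om) \<partial>gauss_noise sig)
        \<le> ennreal gam * (\<integral>\<^sup>+om. U (\<mu> (x, b) + om) \<partial>gauss_noise sig) + ennreal gam * ennreal (Vmax * (\<Sum>i\<in>UNIV. \<bar>m $ i\<bar>) / sig)"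
      by (simp add: mult_left_mono distrib_left[symmetric])
    also have "ennreal gam * ennreal (Vmax * (\<Sum>i\<in>UNIV. \<bar>m $ i\<bar>) / sig) = ennreal (gam * Vmax * (\<Sum>i\<in>UNIV. \<bar>m $ i\<bar>) / sig)"
    proof -
      have "0 \<le> Vmax * (\<Sum>i\<in>UNIV. \<bar>m $ i\<bar>) / sig" using Vmax0 sig by (simp add: sum_nonneg)
      then show ?thesis using gam by (simp add: ennreal_mult[symmetric] mult.assoc times_divide_eq_right del: ennreal_mult)
    qed
    also have "\<dots> \<le> ennreal (lam * norm (\<sigma> (x, b)))"
      using KN[OF g b] unfolding m_def by (rule ennreal_leI)
    finally show ?thesis by - (simp add: add_left_mono)
  qed
  have JTW: "JT gam sig g pol cc T x \<le> W x" if g: "g \<in> F" for g T x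
  proof (induction T arbitrary: x)
    case 0 then show ?case by (simp add: JT_def)
  next
    case (Suc T)
    have gm: "g \<in> borel_measurable borel" by (rule Fm[OF g])
    have "JT gam sig g pol cc (Suc T) x = ennreal (cc x) + ennreal gam * (\<integral>\<^sup>+om. JT gam sig g pol cc T (g (x, pol x) + om) \<partial>gauss_noise sig)"
      by (rule JT_bellman[OF sig _ gm pm ccm' cc0]) (use gam in auto)
    also have "\<dots> \<le> ennreal (cc x) + ennreal gam * (\<integral>\<^sup>+om. W (g (x, pol x) + om) \<partial>gauss_noise sig)"
      by (intro add_left_mono mult_left_mono nn_integral_mono Suc.IH) auto
    also have "\<dots> \<le> ennreal (cc x) + (ennreal gam * (\<integral>\<^sup>+om. U (\<mu> (x, pol x) + om) \<partial>gauss_noise sig) + ennreal (lam * norm (\<sigma> (x, pol x))))"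
      by (intro add_left_mono TV[OF g pA])
    also have "\<dots> = ennreal (ell x) + ennreal gam * (\<integral>\<^sup>+om. U (\<mu> (x, pol x) + om) \<partial>gauss_noise sig)"
      unfolding ell_def using cc0 lam0 by (simp add: ennreal_plus[symmetric] add_ac del: ennreal_plus)
    also have "\<dots> = U x"
      unfolding U_def by (rule Jv_bellman[OF sig _ _ pm ellm ell0, symmetric]) (use gam in auto)
    finally have "JT gam sig g pol cc (Suc T) x \<le> U x" .
    moreover have "JT gam sig g pol cc (Suc T) x \<le> ennreal Vmax"
      unfolding Vmax_def by (rule JT_le_max[OF sig _ gm pm ccm' cc0 ccC]) (use gam in auto)
    ultimately show ?case unfolding W_def by simp
  qed
  have pessW: "pess_value gam sig c F pol y \<le> W y" for y
    unfolding pess_value_def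
  proof (rule SUP_least)
    fix g assume g: "g \<in> F"
    have "value_c gam sig c g pol y = Jv gam sig g pol cc y"
      unfolding value_c_def Jv_def cc_def ..
    also have "\<dots> \<le> W y"
      by (rule Jv_le_JT[OF sig _ Fm[OF g] pm ccm' cc0 JTW[OF g]]) (use gam in auto)
    finally show "value_c gam sig c g pol y \<le> W y" .
  qed
  define Phi where "Phi om ws = (\<Sum>\<tau>. ennreal (gam ^ (Suc t + \<tau>) * ell (traj \<mu> pol (\<mu> (s, a) + om) ws \<tau>)))" for om ws
  have XG: "(\<lambda>p. \<mu> (s, a) + fst p) \<in> borel_measurable (gauss_noise sig \<Otimes>\<^sub>M noise_seq sig)"
  proof -
    have "fst \<in> measurable (gauss_noise sig \<Otimes>\<^sub>M noise_seq sig) (gauss_noise sig :: (real^'d) measure)"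
      by (rule measurable_fst)
    then have "(fst :: (real^'d) \<times> (nat \<Rightarrow> real^'d) \<Rightarrow> real^'d) \<in> borel_measurable (gauss_noise sig \<Otimes>\<^sub>M noise_seq sig)"
      using sets_gauss measurable_cong_sets by blast
    then show ?thesis by measurable
  qed
  have Pm: "(\<lambda>(om, ws). Phi om ws) \<in> borel_measurable (gauss_noise sig \<Otimes>\<^sub>M noise_seq sig)"
  proof -
    have "(\<lambda>p. traj \<mu> pol (\<mu> (s, a) + fst p) (snd p) t) \<in> borel_measurable (gauss_noise sig \<Otimes>\<^sub>M noise_seq sig)" for t
      by (rule traj_measurable[OF sig]) (simp_all add: XG)
    then show ?thesis unfolding Phi_def case_prod_unfold by measurable
  qed
  have "(\<integral>\<^sup>+ ws. (\<Sum>\<tau>. ennreal (gam ^ (Suc t + \<tau>) *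
               (c (traj (mu0 n) pol (mu0 n (s, a) + ws 0) (\<lambda>j. ws (Suc j)) \<tau>,
                   pol (traj (mu0 n) pol (mu0 n (s, a) + ws 0) (\<lambda>j. ws (Suc j)) \<tau>))
                + lam * norm (sn0 n
                  (traj (mu0 n) pol (mu0 n (s, a) + ws 0) (\<lambda>j. ws (Suc j)) \<tau>,
                   pol (traj (mu0 n) pol (mu0 n (s, a) + ws 0) (\<lambda>j. ws (Suc j)) \<tau>))))))
            \<partial>noise_seq sig) = (\<integral>\<^sup>+ws. Phi (ws 0) (\<lambda>j. ws (Suc j)) \<partial>noise_seq sig)"
    unfolding Phi_def ell_def cc_def \<mu>_def \<sigma>_def ..
  also have "\<dots> = (\<integral>\<^sup>+om. (\<integral>\<^sup>+ws. Phi om ws \<partial>noise_seq sig) \<partial>gauss_noise sig)"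
    by (rule seq_split[OF sig Pm])
  also have "\<dots> = (\<integral>\<^sup>+om. ennreal (gam ^ Suc t) * U (\<mu> (s, a) + om) \<partial>gauss_noise sig)"
  proof (intro nn_integral_cong)
    fix om
    have "Phi om ws = ennreal (gam ^ Suc t) * (\<Sum>\<tau>. ennreal (gam ^ \<tau> * ell (traj \<mu> pol (\<mu> (s, a) + om) ws \<tau>)))" for ws
      unfolding Phi_def ennreal_suminf_cmult[symmetric]
      by (intro suminf_cong) (simp add: ennreal_mult[symmetric] ell0 power_add mult.assoc gam(1) less_imp_le)
    then have "(\<integral>\<^sup>+ws. Phi om ws \<partial>noise_seq sig) = (\<integral>\<^sup>+ws. ennreal (gam ^ Suc t) * (\<Sum>\<tau>. ennreal (gam ^ \<tau> * ell (traj \<mu> pol (\<mu> (s, a) + om) ws \<tau>))) \<partial>noise_seq sig)"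
      by simp
    also have "\<dots> = ennreal (gam ^ Suc t) * U (\<mu> (s, a) + om)"
      unfolding U_def Jv_def
      by (rule nn_integral_cmult[OF integrand_meas[OF sig _ \<open>\<mu> \<in> borel_measurable borel\<close> pm ellm ell0]]) (use gam in auto)
    finally show "(\<integral>\<^sup>+ws. Phi om ws \<partial>noise_seq sig) = ennreal (gam ^ Suc t) * U (\<mu> (s, a) + om)" .
  qed
  also have "\<dots> = ennreal (gam ^ Suc t) * (\<integral>\<^sup>+om. U (\<mu> (s, a) + om) \<partial>gauss_noise sig)"
  proof -
    have "(\<lambda>om. U (\<mu> (s, a) + om)) \<in> borel_measurable borel" by measurable
    then have "(\<lambda>om. U (\<mu> (s, a) + om)) \<in> borel_measurable (gauss_noise sig)"
      using sets_gauss measurable_cong_sets by blast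
    then show ?thesis by (rule nn_integral_cmult)
  qed
  finally have RHS: "(\<integral>\<^sup>+ ws. (\<Sum>\<tau>. ennreal (gam ^ (Suc t + \<tau>) *
               (c (traj (mu0 n) pol (mu0 n (s, a) + ws 0) (\<lambda>j. ws (Suc j)) \<tau>,
                   pol (traj (mu0 n) pol (mu0 n (s, a) + ws 0) (\<lambda>j. ws (Suc j)) \<tau>))
                + lam * norm (sn0 n
                  (traj (mu0 n) pol (mu0 n (s, a) + ws 0) (\<lambda>j. ws (Suc j)) \<tau>,
                   pol (traj (mu0 n) pol (mu0 n (s, a) + ws 0) (\<lambda>j. ws (Suc j)) \<tau>))))))
            \<partial>noise_seq sig) = ennreal (gam ^ Suc t) * (\<integral>\<^sup>+om. U (\<mu> (s, a) + om) \<partial>gauss_noise sig)" .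
  have each: "ennreal (gam ^ Suc t) * (\<integral>\<^sup>+ om. pess_value gam sig c F pol (g (s, a) + om) \<partial>gauss_noise sig)
      \<le> ennreal (gam ^ t * lam * norm (\<sigma> (s, a))) + ennreal (gam ^ Suc t) * (\<integral>\<^sup>+om. U (\<mu> (s, a) + om) \<partial>gauss_noise sig)"
    if g: "g \<in> F" for g
  proof -
    have "ennreal (gam ^ Suc t) * (\<integral>\<^sup>+ om. pess_value gam sig c F pol (g (s, a) + om) \<partial>gauss_noise sig)
        \<le> ennreal (gam ^ t) * (ennreal gam * (\<integral>\<^sup>+ om. W (g (s, a) + om) \<partial>gauss_noise sig))"
    proof -
      have e: "ennreal (gam ^ Suc t) = ennreal (gam ^ t) * ennreal gam"
        using gam by (simp add: ennreal_mult[symmetric] mult.commute del: ennreal_mult)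
      have i: "(\<integral>\<^sup>+ om. pess_value gam sig c F pol (g (s, a) + om) \<partial>gauss_noise sig) \<le> (\<integral>\<^sup>+ om. W (g (s, a) + om) \<partial>gauss_noise sig)"
        by (intro nn_integral_mono pessW)
      show ?thesis unfolding e mult.assoc by (intro mult_left_mono i) auto
    qed
    also have "\<dots> \<le> ennreal (gam ^ t) * (ennreal gam * (\<integral>\<^sup>+om. U (\<mu> (s, a) + om) \<partial>gauss_noise sig) + ennreal (lam * norm (\<sigma> (s, a))))"
      by (intro mult_left_mono TV[OF g aA]) auto
    also have "\<dots> = ennreal (gam ^ t * lam * norm (\<sigma> (s, a))) + ennreal (gam ^ Suc t) * (\<integral>\<^sup>+om. U (\<mu> (s, a) + om) \<partial>gauss_noise sig)"
    proof -
      have e: "ennreal (gam ^ Suc t) = ennreal (gam ^ t) * ennreal gam"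
        using gam by (simp add: ennreal_mult[symmetric] mult.commute del: ennreal_mult)
      have e2: "ennreal (gam ^ t * (lam * norm (\<sigma> (s, a)))) = ennreal (gam ^ t) * ennreal (lam * norm (\<sigma> (s, a)))"
        using gam lam0 by (simp add: mult.assoc ennreal_mult)
      show ?thesis unfolding e2 e distrib_left mult.assoc by (rule add.commute)
    qed
    finally show ?thesis .
  qed
  have "ennreal (gam ^ Suc t) * (SUP g\<in>F. \<integral>\<^sup>+ om. pess_value gam sig c F pol (g (s, a) + om) \<partial>gauss_noise sig)
      = (SUP g\<in>F. ennreal (gam ^ Suc t) * (\<integral>\<^sup>+ om. pess_value gam sig c F pol (g (s, a) + om) \<partial>gauss_noise sig))"
    by (rule SUP_mult_left_ennreal)
  also have "\<dots> \<le> ennreal (gam ^ t * lam * norm (\<sigma> (s, a))) + ennreal (gam ^ Suc t) * (\<integral>\<^sup>+om. U (\<mu> (s, a) + om) \<partial>gauss_noise sig)"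
    by (rule SUP_least) (rule each)
  finally show ?thesis unfolding RHS \<sigma>_def .
qed


theorem lemma2:
  fixes M :: "'w measure"
    and f :: "(real^'d) \<times> 'a::euclidean_space \<Rightarrow> real^'d"
    and r c :: "(real^'d) \<times> 'a \<Rightarrow> real"
    and A :: "'a set"
    and pol :: "real^'d \<Rightarrow> 'a"
    and gam sig Cmax kmax B delta Lf Lr Lc Ls :: real
    and k :: "(real^'d) \<times> 'a \<Rightarrow> (real^'d) \<times> 'a \<Rightarrow> real"
    and N :: nat
    and beta :: "nat \<Rightarrow> real"
    and mu sn :: "'w \<Rightarrow> nat \<Rightarrow> (real^'d) \<times> 'a \<Rightarrow> real^'d"
  assumes M: "prob_space M"
    and gam: "0 < gam" "gam < 1"
    and sig: "0 < sig"
    and delta: "0 < delta" "delta < 1"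
    and A: "compact A" "A \<noteq> {}"
    and pol: "\<forall>s. pol s \<in> A" "pol \<in> borel_measurable borel"
    and cost: "\<forall>s. \<forall>a\<in>A. 0 \<le> c (s, a) \<and> c (s, a) \<le> Cmax"
    \<comment> \<open>(A2)\<close>
    and A2: "Lf-lipschitz_on (UNIV \<times> A) f" "Lr-lipschitz_on (UNIV \<times> A) r"
            "Lc-lipschitz_on (UNIV \<times> A) c" "\<forall>w n. Ls-lipschitz_on (UNIV \<times> A) (sn w n)"
    \<comment> \<open>(A3)\<close>
    and A3: "pos_def_kernel (UNIV \<times> A) k" "\<forall>x\<in>UNIV \<times> A. k x x \<le> kmax"
            "\<forall>i. in_rkhs_ball (UNIV \<times> A) k B (\<lambda>x. f x $ i)"
    \<comment> \<open>the statistical model\<close>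
    and model: "\<forall>w n. mu w n \<in> borel_measurable borel" "\<forall>w n. sn w n \<in> borel_measurable borel"
               "\<forall>w n x i. 0 \<le> sn w n x $ i"
    and beta: "mono beta" "\<forall>n. 0 \<le> beta n"
    \<comment> \<open>well-calibration\<close>
    and calib: "\<exists>E\<in>sets M. measure M E \<ge> 1 - delta \<and>
                  (\<forall>w\<in>E. \<forall>n. \<forall>n'\<le>n. \<forall>s. \<forall>a\<in>A. \<forall>i.
                     \<bar>f (s, a) $ i - mu w n' (s, a) $ i\<bar> \<le> beta n' * sn w n' (s, a) $ i)"
  shows "\<exists>E\<in>sets M. measure M E \<ge> 1 - delta \<and>
           (\<forall>w\<in>E. \<forall>n\<in>{1..N}. \<forall>t::nat. \<forall>s. \<forall>a\<in>A.
              (let lam = lambda_pess Cmax kmax gam (beta N) CARD('d) sig;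
                   F = model_set A (mu w) (sn w) beta n
               in ennreal (gam ^ Suc t) *
                    (SUP g\<in>F. \<integral>\<^sup>+ om. pess_value gam sig c F pol (g (s, a) + om) \<partial>gauss_noise sig)
                  \<le> ennreal (gam ^ t * lam * norm (sn w n (s, a))) +
                    (\<integral>\<^sup>+ ws. (\<Sum>\<tau>. ennreal (gam ^ (Suc t + \<tau>) *
                        (c (traj (mu w n) pol (mu w n (s, a) + ws 0) (\<lambda>j. ws (Suc j)) \<tau>,
                            pol (traj (mu w n) pol (mu w n (s, a) + ws 0) (\<lambda>j. ws (Suc j)) \<tau>))
                         + lam * norm (sn w n
                           (traj (mu w n) pol (mu w n (s, a) + ws 0) (\<lambda>j. ws (Suc j)) \<tau>,
                            pol (traj (mu w n) pol (mu w n (s, a) + ws 0) (\<lambda>j. ws (Suc j)) \<tau>))))))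
                     \<partial>noise_seq sig)))"
  proof -
  from calib obtain E where E: "E \<in> sets M" "measure M E \<ge> 1 - delta" by blast
  have ccm: "(\<lambda>y. c (y, pol y)) \<in> borel_measurable borel"
    using cc_meas[OF lipschitz_on_continuous_on[OF A2(3)] compact_imp_closed[OF A(1)] pol(2)] pol(1) by blast
  show ?thesis
  proof (intro bexI[of _ E] conjI ballI allI)
    show "E \<in> sets M" by (rule E(1))
    show "measure M E \<ge> 1 - delta" by (rule E(2))
  next
    fix w n t s a assume n: "n \<in> {1..N}" and a: "a \<in> A"
    show "let lam = lambda_pess Cmax kmax gam (beta N) CARD('d) sig;
                   F = model_set A (mu w) (sn w) beta n
               in ennreal (gam ^ Suc t) *
                    (SUP g\<in>F. \<integral>\<^sup>+ om. pess_value gam sig c F pol (g (s, a) + om) \<partial>gauss_noise sig)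
                  \<le> ennreal (gam ^ t * lam * norm (sn w n (s, a))) +
                    (\<integral>\<^sup>+ ws. (\<Sum>\<tau>. ennreal (gam ^ (Suc t + \<tau>) *
                        (c (traj (mu w n) pol (mu w n (s, a) + ws 0) (\<lambda>j. ws (Suc j)) \<tau>,
                            pol (traj (mu w n) pol (mu w n (s, a) + ws 0) (\<lambda>j. ws (Suc j)) \<tau>))
                         + lam * norm (sn w n
                           (traj (mu w n) pol (mu w n (s, a) + ws 0) (\<lambda>j. ws (Suc j)) \<tau>,
                            pol (traj (mu w n) pol (mu w n (s, a) + ws 0) (\<lambda>j. ws (Suc j)) \<tau>))))))
                     \<partial>noise_seq sig)"
      unfolding Let_def
      by (rule core[OF sig gam pol(1)[rule_format] pol(2) ccm cost model(1)[rule_format] model(2)[rule_format]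
            model(3)[rule_format] beta(1) beta(2)[rule_format] _ a refl refl]) (use n in auto)
  qed
qed

end
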